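(* If $G$ and $H$ are edge transitive graphs, then \[\chi_{vec}(G\times H)=\min\{\chi_{vec}(G),\chi_{vec}(H)\}.\]
   Context: Graphs are finite, simple and undirected. The categorical product $G\times H$ has vertex set $V(G)\times V(H)$, with $(u_1,v_1)\sim(u_2,v_2)$ iff $u_1\sim u_2$ and $v_1\sim v_2$. For a real $k>1$, a vector $k$-coloring of $G$ is a map $\varphi$ from $V(G)$ to the unit sphere of some $\mathbb{R}^d$ with $\varphi(u)^T\varphi(v)\le -\frac{1}{k-1}$ whenever $u\sim v$; the vector chromatic number $\chi_{vec}(G)$ is the smallest such $k$ (equal to $1$ for graphs with no edges). *)

theory Defs
  imports Main "HOL.Real"
begin

definition simple_graph :: "'a set \<Rightarrow> ('a \<Rightarrow> 'a \<Rightarrow> bool) \<Rightarrow> bool" where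
  "simple_graph V E \<longleftrightarrow> finite V \<and> (\<forall>u v. E u v \<longrightarrow> u \<in> V \<and> v \<in> V)
     \<and> (\<forall>u v. E u v \<longrightarrow> E v u) \<and> (\<forall>u. \<not> E u u)"

definition cat_prod_adj :: "('a \<Rightarrow> 'a \<Rightarrow> bool) \<Rightarrow> ('b \<Rightarrow> 'b \<Rightarrow> bool)
    \<Rightarrow> ('a \<times> 'b) \<Rightarrow> ('a \<times> 'b) \<Rightarrow> bool" where
  "cat_prod_adj E F p q \<longleftrightarrow> E (fst p) (fst q) \<and> F (snd p) (snd q)"

definition graph_automorphism :: "'a set \<Rightarrow> ('a \<Rightarrow> 'a \<Rightarrow> bool) \<Rightarrow> ('a \<Rightarrow> 'a) \<Rightarrow> bool" where
  "graph_automorphism V E \<sigma> \<longleftrightarrow> bij_betw \<sigma> V V \<and>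
     (\<forall>u\<in>V. \<forall>v\<in>V. E (\<sigma> u) (\<sigma> v) \<longleftrightarrow> E u v)"

definition edge_transitive :: "'a set \<Rightarrow> ('a \<Rightarrow> 'a \<Rightarrow> bool) \<Rightarrow> bool" where
  "edge_transitive V E \<longleftrightarrow> (\<forall>u v x y. E u v \<longrightarrow> E x y \<longrightarrow>
     (\<exists>\<sigma>. graph_automorphism V E \<sigma> \<and> \<sigma> ` {u, v} = {x, y}))"

text \<open>Vectors of R^d are represented as functions nat \<Rightarrow> real supported on {..<d}.
  A vector k-coloring in dimension d: unit vectors with inner product at most -1/(k-1)
  across every edge.\<close>
definition vector_coloring :: "'a set \<Rightarrow> ('a \<Rightarrow> 'a \<Rightarrow> bool) \<Rightarrow> real \<Rightarrow> nat \<Rightarrow> ('a \<Rightarrow> nat \<Rightarrow> real) \<Rightarrow> bool" where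
  "vector_coloring V E k d \<phi> \<longleftrightarrow>
     (\<forall>u\<in>V. (\<forall>i\<ge>d. \<phi> u i = 0) \<and> (\<Sum>i<d. (\<phi> u i)^2) = 1) \<and>
     (\<forall>u\<in>V. \<forall>v\<in>V. E u v \<longrightarrow> (\<Sum>i<d. \<phi> u i * \<phi> v i) \<le> - 1 / (k - 1))"

definition vector_colorable :: "'a set \<Rightarrow> ('a \<Rightarrow> 'a \<Rightarrow> bool) \<Rightarrow> real \<Rightarrow> bool" where
  "vector_colorable V E k \<longleftrightarrow> k > 1 \<and> (\<exists>d \<phi>. vector_coloring V E k d \<phi>)"

definition chi_vec :: "'a set \<Rightarrow> ('a \<Rightarrow> 'a \<Rightarrow> bool) \<Rightarrow> real" where
  "chi_vec V E = (if \<exists>u\<in>V. \<exists>v\<in>V. E u v then Inf {k. vector_colorable V E k} else 1)"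

end

theory Submission
  imports Defs Complex_Main "HOL-Analysis.Analysis"
begin



definition qf :: "'v set \<Rightarrow> ('v \<Rightarrow> 'v \<Rightarrow> real) \<Rightarrow> ('v \<Rightarrow> real) \<Rightarrow> real" where
  "qf S M x = (\<Sum>u\<in>S. \<Sum>v\<in>S. M u v * x u * x v)"

definition psd :: "'v set \<Rightarrow> ('v \<Rightarrow> 'v \<Rightarrow> real) \<Rightarrow> bool" where
  "psd S M \<longleftrightarrow> (\<forall>x. 0 \<le> qf S M x)"

lemma qf_insert:
  assumes "finite S" "w \<notin> S"
  shows "qf (insert w S) M x = M w w * x w * x w + x w * (\<Sum>v\<in>S. M w v * x v)
     + x w * (\<Sum>u\<in>S. M u w * x u) + qf S M x"
  using assms by (simp add: qf_def sum.distrib sum_distrib_left algebra_simps)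

lemma qf_cong: "(\<And>u. u \<in> S \<Longrightarrow> x u = y u) \<Longrightarrow> qf S M x = qf S M y"
  unfolding qf_def by (intro sum.cong) auto

lemma sum_single:
  assumes "finite S" "v \<in> S"
  shows "(\<Sum>z\<in>S. f z * (if z = v then 1 else 0)) = (f v :: real)"
proof -
  have "(\<Sum>z\<in>S. f z * (if z = v then 1 else 0)) = (\<Sum>z\<in>S. if z = v then f z else 0)"
    by (rule sum.cong) auto
  then show ?thesis using assms by simp
qed

lemma qf_single:
  assumes "finite S" "v \<in> S"
  shows "qf S M (\<lambda>z. if z = v then 1 else 0) = M v v"
proof -
  have "qf S M (\<lambda>z. if z = v then 1 else 0) = (\<Sum>u\<in>S. (\<Sum>z\<in>S. M u z * (if z = v then 1 else 0)) * (if u = v then 1 else 0))"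
    unfolding qf_def by (simp add: sum_distrib_left mult_ac)
  also have "\<dots> = (\<Sum>u\<in>S. M u v * (if u = v then 1 else 0))"
    using assms by (simp add: sum_single)
  also have "\<dots> = M v v" using assms by (simp add: sum_single)
  finally show ?thesis .
qed

lemma psd_gram:
  assumes "finite S" "\<forall>u\<in>S. \<forall>v\<in>S. M u v = M v u" "psd S M"
  shows "\<exists>(n::nat) c. \<forall>u\<in>S. \<forall>v\<in>S. M u v = (\<Sum>i<n. c i u * c i v)"
  using assms
proof (induction S arbitrary: M rule: finite_induct)
  case empty
  then show ?case by auto
next
  case (insert w S)
  have sy: "\<And>u v. u \<in> insert w S \<Longrightarrow> v \<in> insert w S \<Longrightarrow> M u v = M v u"
    using insert.prems(1) by blast
  have symS: "\<forall>u\<in>S. \<forall>v\<in>S. M u v = M v u" using sy by blast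
  have psdS: "psd S M"
    unfolding psd_def
  proof
    fix x
    have "0 \<le> qf (insert w S) M (x(w := 0))" using insert.prems(2) by (simp add: psd_def)
    also have "\<dots> = qf S M x"
      using insert.hyps by (simp add: qf_insert) (rule qf_cong, auto)
    finally show "0 \<le> qf S M x" .
  qed
  have Mww: "0 \<le> M w w"
  proof -
    define x where "x = (\<lambda>z. if z = w then 1 else (0::real))"
    have a: "(\<Sum>v\<in>S. M w v * x v) = 0" by (rule sum.neutral) (use insert.hyps in \<open>auto simp: x_def\<close>)
    have b: "(\<Sum>v\<in>S. M v w * x v) = 0" by (rule sum.neutral) (use insert.hyps in \<open>auto simp: x_def\<close>)
    have c: "qf S M x = qf S M (\<lambda>_. 0)" by (rule qf_cong) (use insert.hyps in \<open>auto simp: x_def\<close>)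
    have "0 \<le> qf (insert w S) M x" using insert.prems(2) by (simp add: psd_def)
    also have "\<dots> = M w w" using insert.hyps by (simp add: qf_insert a b c) (simp add: qf_def x_def)
    finally show ?thesis .
  qed
  show ?case
  proof (cases "M w w = 0")
    case True
    have zero: "M w v = 0" if v: "v \<in> S" for v
    proof (rule ccontr)
      assume ne: "M w v \<noteq> 0"
      define t where "t = - (M v v + 1) / (2 * M w v)"
      define x where "x = (\<lambda>z. if z = w then t else if z = v then 1 else (0::real))"
      have vw: "v \<noteq> w" using v insert.hyps by auto
      have x1: "\<And>z. z \<in> S \<Longrightarrow> x z = (if z = v then 1 else 0)" using insert.hyps by (auto simp: x_def)
      have s1: "(\<Sum>v'\<in>S. M w v' * x v') = M w v"
        using sum_single[of S v "\<lambda>v'. M w v'"] v insert.hyps x1 by (simp cong: sum.cong)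
      have s2: "(\<Sum>u\<in>S. M u w * x u) = M w v"
      proof -
        have "(\<Sum>u\<in>S. M u w * x u) = (\<Sum>u\<in>S. M w u * x u)"
          by (rule sum.cong) (use sy in auto)
        then show ?thesis using s1 by simp
      qed
      have s3: "qf S M x = M v v"
        using qf_single[of S v M] v insert.hyps qf_cong[of S x "\<lambda>z. if z = v then 1 else 0" M] x1 by simp
      have "0 \<le> qf (insert w S) M x" using insert.prems(2) by (simp add: psd_def)
      also have "\<dots> = 2 * t * M w v + M v v"
        using insert.hyps True s1 s2 s3 vw by (simp add: qf_insert x_def algebra_simps)
      also have "\<dots> = -1" using ne by (simp add: t_def field_simps)
      finally show False by simp
    qed
    obtain n :: nat and c where c: "\<forall>u\<in>S. \<forall>v\<in>S. M u v = (\<Sum>i<n. c i u * c i v)"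
      using insert.IH[OF symS psdS] by blast
    define c' where "c' = (\<lambda>i u. if u = w then 0 else c i u)"
    show ?thesis
    proof (intro exI ballI)
      fix u v assume u: "u \<in> insert w S" and v: "v \<in> insert w S"
      show "M u v = (\<Sum>i<n. c' i u * c' i v)"
      proof (cases "u = w")
        case True
        then show ?thesis using v zero \<open>M w w = 0\<close> by (auto simp: c'_def)
      next
        case False
        then have uS: "u \<in> S" using u by simp
        show ?thesis
        proof (cases "v = w")
          case True
          then show ?thesis using zero[OF uS] sy[of u w] uS by (simp add: c'_def)
        next
          case vF: False
          then have vS: "v \<in> S" using v by simp
          show ?thesis using c uS vS False vF by (simp add: c'_def)
        qed
      qed
    qed
  next
    case False
    then have pos: "M w w > 0" using Mww by simp
    define M' where "M' = (\<lambda>u v. M u v - M u w * M w v / M w w)"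
    have symS': "\<forall>u\<in>S. \<forall>v\<in>S. M' u v = M' v u"
      using sy by (auto simp: M'_def)
    have psdS': "psd S M'"
      unfolding psd_def
    proof
      fix x
      define r where "r = (\<Sum>v\<in>S. M w v * x v)"
      have r2: "(\<Sum>u\<in>S. M u w * x u) = r"
        unfolding r_def by (intro sum.cong) (use sy in auto)
      define x' where "x' = x(w := - r / M w w)"
      have e1: "(\<Sum>v\<in>S. M w v * x' v) = r" unfolding r_def x'_def using insert.hyps
        by (intro sum.cong) auto
      have e2: "(\<Sum>u\<in>S. M u w * x' u) = r" unfolding r2[symmetric] x'_def using insert.hyps
        by (intro sum.cong) auto
      have e3: "qf S M x' = qf S M x" unfolding qf_def x'_def using insert.hyps
        by (intro sum.cong) auto
      have "0 \<le> qf (insert w S) M x'" using insert.prems(2) by (simp add: psd_def)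
      also have "\<dots> = qf S M x - r * r / M w w"
        using insert.hyps pos by (simp add: qf_insert e1 e2 e3) (simp add: x'_def field_simps)
      also have "\<dots> = qf S M' x"
      proof -
        have "qf S M' x = qf S M x - (\<Sum>u\<in>S. \<Sum>v\<in>S. (M u w * x u) * (M w v * x v)) / M w w"
          by (simp add: qf_def M'_def sum_subtractf sum_divide_distrib algebra_simps)
        also have "(\<Sum>u\<in>S. \<Sum>v\<in>S. (M u w * x u) * (M w v * x v)) = r * r"
          by (simp add: sum_product[symmetric] r2 r_def)
        finally show ?thesis by simp
      qed
      finally show "0 \<le> qf S M' x" .
    qed
    obtain n :: nat and c where c: "\<forall>u\<in>S. \<forall>v\<in>S. M' u v = (\<Sum>i<n. c i u * c i v)"
      using insert.IH[OF symS' psdS'] by blast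
    define c' where "c' = (\<lambda>i u. if i < n then (if u = w then 0 else c i u) else M u w / sqrt (M w w))"
    have sq: "sqrt (M w w) * sqrt (M w w) = M w w" using pos by simp
    show ?thesis
    proof (intro exI ballI)
      fix u v assume u: "u \<in> insert w S" and v: "v \<in> insert w S"
      have "(\<Sum>i<Suc n. c' i u * c' i v) = (\<Sum>i<n. c' i u * c' i v) + M u w * M v w / M w w"
        using sq by (simp add: c'_def)
      also have "\<dots> = M u v"
      proof (cases "u = w")
        case True
        then show ?thesis using v sy[of v w] pos by (auto simp: c'_def)
      next
        case uF: False
        show ?thesis
        proof (cases "v = w")
          case True
          then show ?thesis using u uF sy[of u w] pos by (auto simp: c'_def)
        next
          case False
          have "(\<Sum>i<n. c' i u * c' i v) = M' u v" using c u v uF False by (auto simp: c'_def)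
          then show ?thesis using u v uF False sy[of v w] by (auto simp: M'_def)
        qed
      qed
      finally show "M u v = (\<Sum>i<Suc n. c' i u * c' i v)" by simp
    qed
  qed
qed




lemma qf_gram:
  assumes "finite S" "\<forall>u\<in>S. \<forall>v\<in>S. M u v = (\<Sum>i<n. c i u * c i v)"
  shows "qf S M x = (\<Sum>i<n. (\<Sum>u\<in>S. c i u * x u)^2)"
proof -
  have "qf S M x = (\<Sum>u\<in>S. \<Sum>v\<in>S. \<Sum>i<n. c i u * c i v * x u * x v)"
    unfolding qf_def using assms(2) by (simp add: sum_distrib_right)
  also have "\<dots> = (\<Sum>i<n. \<Sum>u\<in>S. \<Sum>v\<in>S. c i u * c i v * x u * x v)"
    by (simp only: sum.swap[where B="{..<n}"])
  also have "\<dots> = (\<Sum>i<n. (\<Sum>u\<in>S. c i u * x u)^2)"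
    by (simp add: power2_eq_square sum_product mult_ac)
  finally show ?thesis .
qed

lemma psd_null:
  assumes "finite S" "\<forall>u\<in>S. \<forall>v\<in>S. M u v = M v u" "psd S M" "qf S M a = 0" "u \<in> S"
  shows "(\<Sum>v\<in>S. M u v * a v) = 0"
proof -
  obtain n :: nat and c where c: "\<forall>u\<in>S. \<forall>v\<in>S. M u v = (\<Sum>i<n. c i u * c i v)"
    using psd_gram[OF assms(1-3)] by blast
  have "(\<Sum>i<n. (\<Sum>u\<in>S. c i u * a u)^2) = 0" using qf_gram[OF assms(1) c] assms(4) by simp
  then have z: "\<forall>i\<in>{..<n}. (\<Sum>u\<in>S. c i u * a u)^2 = 0"
    by (subst (asm) sum_nonneg_eq_0_iff) auto
  have "(\<Sum>v\<in>S. M u v * a v) = (\<Sum>v\<in>S. (\<Sum>i<n. c i u * c i v) * a v)"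
    by (rule sum.cong) (use c assms(5) in auto)
  also have "\<dots> = (\<Sum>v\<in>S. \<Sum>i<n. c i u * (c i v * a v))"
    by (simp add: sum_distrib_right mult.assoc)
  also have "\<dots> = (\<Sum>i<n. c i u * (\<Sum>v\<in>S. c i v * a v))"
    by (simp only: sum.swap[where B="{..<n}"] sum_distrib_left)
  also have "\<dots> = 0" using z by simp
  finally show ?thesis .
qed

definition P2 :: "'a set \<Rightarrow> 'b set \<Rightarrow> ('a \<Rightarrow> 'a \<Rightarrow> real) \<Rightarrow> ('b \<Rightarrow> 'b \<Rightarrow> real) \<Rightarrow> ('a \<Rightarrow> 'b \<Rightarrow> real) \<Rightarrow> real" where
  "P2 S T M N Y = (\<Sum>u\<in>S. \<Sum>v\<in>T. \<Sum>u'\<in>S. \<Sum>v'\<in>T. M u u' * N v v' * Y u v * Y u' v')"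

lemma kron_psd:
  assumes "finite S" "finite T" "psd S M" "\<forall>u\<in>T. \<forall>v\<in>T. N u v = N v u" "psd T N"
  shows "0 \<le> P2 S T M N Y"
proof -
  obtain n :: nat and c where c: "\<forall>u\<in>T. \<forall>v\<in>T. N u v = (\<Sum>i<n. c i u * c i v)"
    using psd_gram[OF assms(2,4,5)] by blast
  have "P2 S T M N Y = (\<Sum>u\<in>S. \<Sum>v\<in>T. \<Sum>u'\<in>S. \<Sum>v'\<in>T. \<Sum>i<n. M u u' * (c i v * Y u v) * (c i v' * Y u' v'))"
    unfolding P2_def using c by (simp add: sum_distrib_left sum_distrib_right mult_ac)
  also have "\<dots> = (\<Sum>i<n. \<Sum>u\<in>S. \<Sum>v\<in>T. \<Sum>u'\<in>S. \<Sum>v'\<in>T. M u u' * (c i v * Y u v) * (c i v' * Y u' v'))"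
    by (simp only: sum.swap[where B="{..<n}"])
  also have "\<dots> = (\<Sum>i<n. qf S M (\<lambda>u. \<Sum>v\<in>T. c i v * Y u v))"
    unfolding qf_def
  proof (intro sum.cong refl)
    fix i u
    have "(\<Sum>v\<in>T. \<Sum>u'\<in>S. \<Sum>v'\<in>T. M u u' * (c i v * Y u v) * (c i v' * Y u' v'))
        = (\<Sum>u'\<in>S. \<Sum>v\<in>T. \<Sum>v'\<in>T. M u u' * (c i v * Y u v) * (c i v' * Y u' v'))"
      by (rule sum.swap)
    also have "\<dots> = (\<Sum>u'\<in>S. M u u' * (\<Sum>v\<in>T. c i v * Y u v) * (\<Sum>v'\<in>T. c i v' * Y u' v'))"
      apply (simp add: sum_distrib_left sum_distrib_right)
      apply (rule sum.cong[OF refl])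
      apply (rule sum.swap)
      done
    finally show "(\<Sum>v\<in>T. \<Sum>u'\<in>S. \<Sum>v'\<in>T. M u u' * (c i v * Y u v) * (c i v' * Y u' v'))
        = (\<Sum>u'\<in>S. M u u' * (\<Sum>v\<in>T. c i v * Y u v) * (\<Sum>v'\<in>T. c i v' * Y u' v'))" .
  qed
  also have "\<dots> \<ge> 0" using assms(3) by (intro sum_nonneg) (auto simp: psd_def)
  finally show ?thesis by simp
qed




definition nsq :: "'v set \<Rightarrow> ('v \<Rightarrow> real) \<Rightarrow> real" where
  "nsq S x = (\<Sum>u\<in>S. (x u)^2)"

lemma qf_scale: "qf S M (\<lambda>u. c * x u) = c^2 * qf S M x"
  by (simp add: qf_def sum_distrib_left mult_ac power2_eq_square)

lemma nsq_scale: "nsq S (\<lambda>u. c * x u) = c^2 * nsq S x"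
  by (simp add: nsq_def sum_distrib_left mult_ac power2_eq_square)

lemma nsq_nonneg: "0 \<le> nsq S x"
  by (simp add: nsq_def sum_nonneg)

lemma nsq_zero:
  assumes "finite S" "nsq S x = 0" "u \<in> S" shows "x u = 0"
proof -
  have "(\<Sum>u\<in>S. (x u)^2) = 0" using assms(2) by (simp add: nsq_def)
  then have "\<forall>u\<in>S. (x u)^2 = 0" using sum_nonneg_eq_0_iff[of S "\<lambda>u. (x u)^2"] assms(1) by simp
  then show ?thesis using assms(3) by simp
qed

lemma nsq_coord:
  assumes "finite S" "u \<in> S" shows "(x u)^2 \<le> nsq S x"
  unfolding nsq_def using assms by (intro member_le_sum) auto

lemma qf_zero:
  assumes "finite S" "nsq S x = 0" shows "qf S M x = 0"
  unfolding qf_def using nsq_zero[OF assms] by simp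

lemma qf_bound:
  assumes "finite S" "nsq S x = 1"
  shows "\<bar>qf S M x\<bar> \<le> (\<Sum>u\<in>S. \<Sum>v\<in>S. \<bar>M u v\<bar>)"
proof -
  have c: "\<bar>x u\<bar> \<le> 1" if "u \<in> S" for u
  proof -
    have "(x u)^2 \<le> 1" using nsq_coord[OF assms(1) that, of x] assms(2) by simp
    then show ?thesis by (simp add: abs_square_le_1)
  qed
  have "\<bar>qf S M x\<bar> \<le> (\<Sum>u\<in>S. \<bar>\<Sum>v\<in>S. M u v * x u * x v\<bar>)"
    unfolding qf_def by (rule sum_abs)
  also have "\<dots> \<le> (\<Sum>u\<in>S. \<Sum>v\<in>S. \<bar>M u v * x u * x v\<bar>)"
    by (intro sum_mono sum_abs)
  also have "\<dots> \<le> (\<Sum>u\<in>S. \<Sum>v\<in>S. \<bar>M u v\<bar>)"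
  proof (intro sum_mono)
    fix u v assume u: "u \<in> S" and v: "v \<in> S"
    have "\<bar>x u * x v\<bar> \<le> 1" using c[OF u] c[OF v]
      by (simp add: abs_mult mult_le_one)
    then have "\<bar>M u v\<bar> * \<bar>x u * x v\<bar> \<le> \<bar>M u v\<bar> * 1" by (intro mult_left_mono) auto
    then show "\<bar>M u v * x u * x v\<bar> \<le> \<bar>M u v\<bar>" by (simp add: abs_mult mult.assoc)
  qed
  finally show ?thesis .
qed

lemma min_eig:
  fixes M :: "'v \<Rightarrow> 'v \<Rightarrow> real"
  assumes fin: "finite S" and ne: "S \<noteq> {}"
  shows "\<exists>a lam. nsq S a = 1 \<and> qf S M a = lam \<and> (\<forall>x. lam * nsq S x \<le> qf S M x)"
proof -
  define U where "U = {x. nsq S x = 1}"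
  define Q where "Q = qf S M"
  define B where "B = (\<Sum>u\<in>S. \<Sum>v\<in>S. \<bar>M u v\<bar>)"
  define lam where "lam = Inf (Q ` U)"
  obtain u0 where u0: "u0 \<in> S" using ne by blast
  have "nsq S (\<lambda>z. if z = u0 then 1 else 0) = 1"
  proof -
    have "nsq S (\<lambda>z. if z = u0 then 1 else 0) = (\<Sum>z\<in>S. if z = u0 then 1 else 0)"
      unfolding nsq_def by (rule sum.cong) auto
    then show ?thesis using fin u0 by simp
  qed
  then have Une: "U \<noteq> {}" by (auto simp: U_def)
  have bdd: "bdd_below (Q ` U)"
  proof (rule bdd_belowI[of _ "-B"])
    fix y assume "y \<in> Q ` U"
    then obtain x where "nsq S x = 1" "y = Q x" by (auto simp: U_def)
    then show "-B \<le> y" using qf_bound[OF fin, of x M] by (auto simp: Q_def B_def)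
  qed
  have lower: "lam \<le> Q x" if "nsq S x = 1" for x
    unfolding lam_def using bdd that by (intro cInf_lower) (auto simp: U_def)
  have "\<forall>n. \<exists>x. nsq S x = 1 \<and> Q x < lam + inverse (real (Suc n))"
  proof
    fix n
    have "Inf (Q ` U) < lam + inverse (real (Suc n))" by (simp add: lam_def)
    then obtain y where "y \<in> Q ` U" "y < lam + inverse (real (Suc n))"
      using cInf_lessD[of "Q ` U"] Une by blast
    then show "\<exists>x. nsq S x = 1 \<and> Q x < lam + inverse (real (Suc n))" by (auto simp: U_def)
  qed
  then obtain f where f: "\<And>n. nsq S (f n) = 1" "\<And>n. Q (f n) < lam + inverse (real (Suc n))"
    by metis
  have bp: "bounded ((\<lambda>x. x k) ` range f)" if "k \<in> S" for k
  proof -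
    have "\<forall>y\<in>(\<lambda>x. x k) ` range f. norm y \<le> 1"
    proof
      fix y assume "y \<in> (\<lambda>x. x k) ` range f"
      then obtain n where "y = f n k" by auto
      moreover have "(f n k)^2 \<le> 1" using nsq_coord[OF fin that, of "f n"] f(1)[of n] by simp
      ultimately show "norm y \<le> 1" by (simp add: abs_square_le_1)
    qed
    then show ?thesis by (auto simp: bounded_iff)
  qed
  have "\<forall>\<delta>\<subseteq>S. \<exists>l::'v\<Rightarrow>real. \<exists> r::nat\<Rightarrow>nat.
    strict_mono r \<and> (\<forall>\<epsilon>>0. eventually (\<lambda>n. \<forall>i\<in>\<delta>. dist (f (r n) i) (l i) < \<epsilon>) sequentially)"
    by (rule compact_lemma_general[where proj="\<lambda>x k. x k" and unproj="\<lambda>x. x"])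
       (use fin bp in auto)
  then obtain l r where r: "strict_mono r"
    and lr: "\<forall>\<epsilon>>0. eventually (\<lambda>n. \<forall>i\<in>S. dist (f (r n) i) (l i) < \<epsilon>) sequentially"
    by blast
  have co: "(\<lambda>n. f (r n) i) \<longlonglongrightarrow> l i" if "i \<in> S" for i
  proof (rule tendstoI)
    fix e :: real assume "e > 0"
    with lr have "eventually (\<lambda>n. \<forall>i\<in>S. dist (f (r n) i) (l i) < e) sequentially" by blast
    then show "eventually (\<lambda>n. dist (f (r n) i) (l i) < e) sequentially"
      by eventually_elim (use that in auto)
  qed
  have tQ: "(\<lambda>n. Q (f (r n))) \<longlonglongrightarrow> Q l"
    unfolding Q_def qf_def by (intro tendsto_sum tendsto_mult tendsto_const co)
  have tN: "(\<lambda>n. nsq S (f (r n))) \<longlonglongrightarrow> nsq S l"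
    unfolding nsq_def by (intro tendsto_sum tendsto_power co)
  have nl: "nsq S l = 1" using tN f(1) LIMSEQ_unique[of "\<lambda>n. 1" "nsq S l" 1] by simp
  have tQ2: "(\<lambda>n. Q (f (r n))) \<longlonglongrightarrow> lam"
  proof (rule tendsto_sandwich[of "\<lambda>n. lam" _ _ "\<lambda>n. lam + inverse (real (Suc n))"])
    show "\<forall>\<^sub>F n in sequentially. lam \<le> Q (f (r n))" using lower f(1) by simp
    show "\<forall>\<^sub>F n in sequentially. Q (f (r n)) \<le> lam + inverse (real (Suc n))"
    proof (rule always_eventually, rule allI)
      fix n
      have "n \<le> r n" using r by (rule seq_suble)
      then have iv: "inverse (real (Suc (r n))) \<le> inverse (real (Suc n))"
        by (intro le_imp_inverse_le) auto
      show "Q (f (r n)) \<le> lam + inverse (real (Suc n))" using f(2)[of "r n"] iv by linarith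
    qed
    show "(\<lambda>n. lam) \<longlonglongrightarrow> lam" by simp
    show "(\<lambda>n. lam + inverse (real (Suc n))) \<longlonglongrightarrow> lam"
      using LIMSEQ_inverse_real_of_nat_add[of lam] by simp
  qed
  have Ql: "Q l = lam" using LIMSEQ_unique[OF tQ tQ2] .
  have all: "lam * nsq S x \<le> qf S M x" for x
  proof (cases "nsq S x = 0")
    case True
    then show ?thesis using qf_zero[OF fin True] by simp
  next
    case False
    then have pos: "nsq S x > 0" using nsq_nonneg[of S x] by simp
    define t where "t = inverse (sqrt (nsq S x))"
    have t2: "t^2 = inverse (nsq S x)" using pos by (simp add: t_def power_inverse)
    have "nsq S (\<lambda>u. t * x u) = 1" using pos by (simp add: nsq_scale t2)
    then have "lam \<le> Q (\<lambda>u. t * x u)" by (rule lower)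
    also have "\<dots> = qf S M x / nsq S x" by (simp add: Q_def qf_scale t2 field_simps)
    finally show ?thesis using pos by (simp add: field_simps)
  qed
  show ?thesis using nl Ql all by (auto simp: Q_def)
qed




definition adjm :: "('v \<Rightarrow> 'v \<Rightarrow> bool) \<Rightarrow> 'v \<Rightarrow> 'v \<Rightarrow> real" where
  "adjm E u v = (if E u v then 1 else 0)"

definition idm :: "'v \<Rightarrow> 'v \<Rightarrow> real" where
  "idm u v = (if u = v then 1 else 0)"

lemma deg_sum:
  assumes "finite S"
  shows "(\<Sum>v\<in>S. adjm E u v) = real (card {v\<in>S. E u v})"
  using assms by (simp add: adjm_def sum.inter_filter[symmetric])

lemma qf_idm:
  assumes "finite S" shows "qf S idm x = nsq S x"
proof -
  have "qf S idm x = (\<Sum>u\<in>S. x u * (\<Sum>v\<in>S. x v * idm u v))"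
    unfolding qf_def by (simp add: sum_distrib_left mult_ac)
  also have "\<dots> = (\<Sum>u\<in>S. x u * x u)"
  proof (intro sum.cong refl)
    fix u assume u: "u \<in> S"
    have "(\<Sum>v\<in>S. x v * idm u v) = (\<Sum>v\<in>S. x v * (if v = u then 1 else 0))"
      by (rule sum.cong) (auto simp: idm_def)
    also have "\<dots> = x u" using sum_single[OF assms u] .
    finally show "x u * (\<Sum>v\<in>S. x v * idm u v) = x u * x u" by simp
  qed
  finally show ?thesis by (simp add: nsq_def power2_eq_square)
qed

lemma qf_diff: "qf S (\<lambda>u v. M1 u v - c * M2 u v) x = qf S M1 x - c * qf S M2 x"
  by (simp add: qf_def algebra_simps sum_subtractf sum_distrib_left)

lemma hoffman:
  assumes fin: "finite S" and vc: "vector_coloring S E' k d \<phi>" and k: "k > 1"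
    and lb: "\<forall>y. - s * nsq S y \<le> qf S (adjm E') y"
    and xn: "\<forall>u\<in>S. 0 \<le> x u"
  shows "qf S (adjm E') x \<le> (k - 1) * s * nsq S x"
proof -
  define L where "L = (\<Sum>u\<in>S. \<Sum>v\<in>S. adjm E' u v * x u * x v * (\<Sum>i<d. \<phi> u i * \<phi> v i))"
  have unit: "\<And>u. u \<in> S \<Longrightarrow> (\<Sum>i<d. (\<phi> u i)^2) = 1"
    and edge: "\<And>u v. u \<in> S \<Longrightarrow> v \<in> S \<Longrightarrow> E' u v \<Longrightarrow> (\<Sum>i<d. \<phi> u i * \<phi> v i) \<le> - 1 / (k - 1)"
    using vc unfolding vector_coloring_def by auto
  have "L \<le> (\<Sum>u\<in>S. \<Sum>v\<in>S. adjm E' u v * x u * x v * (- 1 / (k - 1)))"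
    unfolding L_def
  proof (intro sum_mono)
    fix u v assume u: "u \<in> S" and v: "v \<in> S"
    show "adjm E' u v * x u * x v * (\<Sum>i<d. \<phi> u i * \<phi> v i) \<le> adjm E' u v * x u * x v * (- 1 / (k - 1))"
    proof (cases "E' u v")
      case True
      have "0 \<le> x u * x v" using xn u v by simp
      then show ?thesis using mult_left_mono[OF edge[OF u v True] \<open>0 \<le> x u * x v\<close>] True
        by (simp add: adjm_def)
    qed (simp add: adjm_def)
  qed
  also have "\<dots> = - qf S (adjm E') x / (k - 1)"
    by (simp add: qf_def sum_divide_distrib sum_negf)
  finally have L1: "L \<le> - qf S (adjm E') x / (k - 1)" .
  have "L = (\<Sum>u\<in>S. \<Sum>v\<in>S. \<Sum>i<d. adjm E' u v * (x u * \<phi> u i) * (x v * \<phi> v i))"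
    unfolding L_def by (simp add: sum_distrib_left mult_ac)
  also have "\<dots> = (\<Sum>i<d. \<Sum>u\<in>S. \<Sum>v\<in>S. adjm E' u v * (x u * \<phi> u i) * (x v * \<phi> v i))"
    by (simp only: sum.swap[where B="{..<d}"])
  also have "\<dots> = (\<Sum>i<d. qf S (adjm E') (\<lambda>u. x u * \<phi> u i))"
    by (simp add: qf_def)
  finally have L2: "L = (\<Sum>i<d. qf S (adjm E') (\<lambda>u. x u * \<phi> u i))" .
  have "(\<Sum>i<d. - s * nsq S (\<lambda>u. x u * \<phi> u i)) \<le> L"
    unfolding L2 using lb by (intro sum_mono) auto
  moreover have "(\<Sum>i<d. nsq S (\<lambda>u. x u * \<phi> u i)) = nsq S x"
  proof -
    have "(\<Sum>i<d. nsq S (\<lambda>u. x u * \<phi> u i)) = (\<Sum>u\<in>S. (x u)^2 * (\<Sum>i<d. (\<phi> u i)^2))"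
      unfolding nsq_def by (simp add: sum.swap[where A="{..<d}"] sum_distrib_left power_mult_distrib)
    also have "\<dots> = nsq S x" unfolding nsq_def by (intro sum.cong refl) (simp add: unit)
    finally show ?thesis .
  qed
  moreover have "(\<Sum>i<d. - s * nsq S (\<lambda>u. x u * \<phi> u i)) = - s * (\<Sum>i<d. nsq S (\<lambda>u. x u * \<phi> u i))"
    by (rule sum_distrib_left[symmetric])
  ultimately have "- s * nsq S x \<le> L" by simp
  with L1 have "- s * nsq S x \<le> - qf S (adjm E') x / (k - 1)" by linarith
  then have "(k - 1) * (- s * nsq S x) \<le> (k - 1) * (- qf S (adjm E') x / (k - 1))"
    using k by (intro mult_left_mono) auto
  moreover have "(k - 1) * (- qf S (adjm E') x / (k - 1)) = - qf S (adjm E') x" using k by simp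
  moreover have "(k - 1) * (- s * nsq S x) = - ((k - 1) * s * nsq S x)" by (simp add: algebra_simps)
  ultimately show ?thesis by linarith
qed

lemma deg_bound:
  assumes fin: "finite S" and sym: "\<forall>u v. E' u v \<longrightarrow> E' v u"
    and deg: "\<forall>u\<in>S. real (card {v\<in>S. E' u v}) \<le> dd"
  shows "qf S (adjm E') x \<le> dd * nsq S x"
proof -
  have "qf S (adjm E') x \<le> (\<Sum>u\<in>S. \<Sum>v\<in>S. adjm E' u v * ((x u)^2 + (x v)^2) / 2)"
    unfolding qf_def
  proof (intro sum_mono)
    fix u v
    have "x u * x v \<le> ((x u)^2 + (x v)^2) / 2"
      using sum_squares_bound[of "x u" "x v"] by (simp add: power2_eq_square)
    moreover have "0 \<le> adjm E' u v" by (simp add: adjm_def)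
    ultimately show "adjm E' u v * x u * x v \<le> adjm E' u v * ((x u)^2 + (x v)^2) / 2"
      using mult_left_mono by (fastforce simp: mult.assoc)
  qed
  also have "\<dots> = ((\<Sum>u\<in>S. \<Sum>v\<in>S. adjm E' u v * (x u)^2) + (\<Sum>u\<in>S. \<Sum>v\<in>S. adjm E' u v * (x v)^2)) / 2"
    by (simp add: distrib_left add_divide_distrib sum.distrib sum_divide_distrib[symmetric])
  finally have h1: "qf S (adjm E') x \<le> ((\<Sum>u\<in>S. \<Sum>v\<in>S. adjm E' u v * (x u)^2) + (\<Sum>u\<in>S. \<Sum>v\<in>S. adjm E' u v * (x v)^2)) / 2" .
  have h2: "(\<Sum>u\<in>S. \<Sum>v\<in>S. adjm E' u v * (x v)^2) = (\<Sum>u\<in>S. \<Sum>v\<in>S. adjm E' u v * (x u)^2)"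
    apply (subst sum.swap)
    apply (intro sum.cong refl)
    using sym by (auto simp: adjm_def)
  have h3: "(\<Sum>u\<in>S. \<Sum>v\<in>S. adjm E' u v * (x u)^2) = (\<Sum>u\<in>S. real (card {v\<in>S. E' u v}) * (x u)^2)"
    by (simp add: sum_distrib_right[symmetric] deg_sum[OF fin])
  have h4: "(\<Sum>u\<in>S. real (card {v\<in>S. E' u v}) * (x u)^2) \<le> (\<Sum>u\<in>S. dd * (x u)^2)"
    using deg by (intro sum_mono mult_right_mono) auto
  have h5: "(\<Sum>u\<in>S. dd * (x u)^2) = dd * nsq S x" by (simp add: nsq_def sum_distrib_left)
  have "qf S (adjm E') x \<le> (\<Sum>u\<in>S. \<Sum>v\<in>S. adjm E' u v * (x u)^2)" using h1 unfolding h2 by simp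
  also note h3 also note h4 also note h5
  finally show ?thesis .
qed




lemma qf_lin: "qf S (\<lambda>u v. a * M1 u v + b * M2 u v) x = a * qf S M1 x + b * qf S M2 x"
  by (simp add: qf_def algebra_simps sum.distrib sum_distrib_left)

lemma P2_lin_left: "P2 S T (\<lambda>u v. a * M1 u v + b * M2 u v) N Y = a * P2 S T M1 N Y + b * P2 S T M2 N Y"
  by (simp add: P2_def algebra_simps sum.distrib sum_distrib_left)

lemma P2_lin_right: "P2 S T M (\<lambda>u v. a * N1 u v + b * N2 u v) Y = a * P2 S T M N1 Y + b * P2 S T M N2 Y"
  by (simp add: P2_def algebra_simps sum.distrib sum_distrib_left)

lemma idm_collapse:
  assumes "finite S" "u \<in> S" shows "(\<Sum>u'\<in>S. idm u u' * G u') = (G u :: real)"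
proof -
  have "(\<Sum>u'\<in>S. idm u u' * G u') = (\<Sum>u'\<in>S. G u' * (if u' = u then 1 else 0))"
    by (rule sum.cong) (auto simp: idm_def)
  also have "\<dots> = G u" by (rule sum_single[OF assms])
  finally show ?thesis .
qed

lemma P2_idm_left:
  assumes "finite S" shows "P2 S T idm N Y = (\<Sum>u\<in>S. qf T N (Y u))"
  unfolding P2_def
proof (intro sum.cong refl)
  fix u assume u: "u \<in> S"
  have "(\<Sum>v\<in>T. \<Sum>u'\<in>S. \<Sum>v'\<in>T. idm u u' * N v v' * Y u v * Y u' v')
      = (\<Sum>u'\<in>S. \<Sum>v\<in>T. \<Sum>v'\<in>T. idm u u' * N v v' * Y u v * Y u' v')"
    by (rule sum.swap)
  also have "\<dots> = (\<Sum>u'\<in>S. idm u u' * (\<Sum>v\<in>T. \<Sum>v'\<in>T. N v v' * Y u v * Y u' v'))"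
    by (simp add: sum_distrib_left mult_ac)
  also have "\<dots> = (\<Sum>v\<in>T. \<Sum>v'\<in>T. N v v' * Y u v * Y u v')"
    by (rule idm_collapse[OF assms u])
  finally show "(\<Sum>v\<in>T. \<Sum>u'\<in>S. \<Sum>v'\<in>T. idm u u' * N v v' * Y u v * Y u' v') = qf T N (Y u)"
    by (simp add: qf_def)
qed

lemma idm_sym: "idm u v = idm v u" by (auto simp: idm_def)

lemma prod_bound:
  assumes fV: "finite V" and fW: "finite W"
    and sB: "\<forall>u\<in>W. \<forall>v\<in>W. B u v = B v u"
    and lA: "\<forall>x. sG * nsq V x \<le> qf V A x" and uA: "\<forall>x. qf V A x \<le> dG * nsq V x"
    and lB: "\<forall>x. sH * nsq W x \<le> qf W B x" and uB: "\<forall>x. qf W B x \<le> dH * nsq W x"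
    and h1: "sH \<le> 0" and h2: "0 \<le> dH" and h3: "sH < dH"
  shows "min (sH * dG) (sG * dH) * (\<Sum>u\<in>V. nsq W (Y u)) \<le> P2 V W A B Y"
proof -
  define M1 where "M1 = (\<lambda>u v. 1 * A u v + (- sG) * idm u v)"
  define M2 where "M2 = (\<lambda>u v. dG * idm u v + (- 1) * A u v)"
  define N1 where "N1 = (\<lambda>u v. 1 * B u v + (- sH) * idm u v)"
  define N2 where "N2 = (\<lambda>u v. dH * idm u v + (- 1) * B u v)"
  have pM1: "psd V M1" unfolding psd_def M1_def qf_lin qf_idm[OF fV] using lA by (auto simp: algebra_simps)
  have pM2: "psd V M2" unfolding psd_def M2_def qf_lin qf_idm[OF fV] using uA by (auto simp: algebra_simps)
  have pN1: "psd W N1" unfolding psd_def N1_def qf_lin qf_idm[OF fW] using lB by (auto simp: algebra_simps)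
  have pN2: "psd W N2" unfolding psd_def N2_def qf_lin qf_idm[OF fW] using uB by (auto simp: algebra_simps)
  have sN1: "\<forall>u\<in>W. \<forall>v\<in>W. N1 u v = N1 v u" using sB by (auto simp: N1_def idm_sym)
  have sN2: "\<forall>u\<in>W. \<forall>v\<in>W. N2 u v = N2 v u" using sB by (auto simp: N2_def idm_sym)
  define p where "p = P2 V W A B Y"
  define a where "a = P2 V W A idm Y"
  define b where "b = P2 V W idm B Y"
  define y2 where "y2 = P2 V W idm idm Y"
  have b_eq: "b = (\<Sum>u\<in>V. qf W B (Y u))" unfolding b_def by (rule P2_idm_left[OF fV])
  have y2_eq: "y2 = (\<Sum>u\<in>V. nsq W (Y u))" unfolding y2_def P2_idm_left[OF fV] qf_idm[OF fW] ..
  have y2_nn: "0 \<le> y2" unfolding y2_eq by (intro sum_nonneg nsq_nonneg)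
  have bl: "sH * y2 \<le> b" unfolding b_eq y2_eq sum_distrib_left using lB by (intro sum_mono) auto
  have bu: "b \<le> dH * y2" unfolding b_eq y2_eq sum_distrib_left using uB by (intro sum_mono) auto
  have T1: "0 \<le> p - sH * a - sG * b + sG * sH * y2"
  proof -
    have "0 \<le> P2 V W M1 N1 Y" by (rule kron_psd[OF fV fW pM1 sN1 pN1])
    also have "P2 V W M1 N1 Y = p - sH * a - sG * b + sG * sH * y2"
      unfolding M1_def N1_def P2_lin_left P2_lin_right p_def a_def b_def y2_def by (simp add: algebra_simps)
    finally show ?thesis .
  qed
  have T2: "0 \<le> p - dH * a - dG * b + dG * dH * y2"
  proof -
    have "0 \<le> P2 V W M2 N2 Y" by (rule kron_psd[OF fV fW pM2 sN2 pN2])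
    also have "P2 V W M2 N2 Y = p - dH * a - dG * b + dG * dH * y2"
      unfolding M2_def N2_def P2_lin_left P2_lin_right p_def a_def b_def y2_def by (simp add: algebra_simps)
    finally show ?thesis .
  qed
  define beta where "beta = sG * dH - sH * dG"
  have c1: "0 \<le> dH * (p - sH * a - sG * b + sG * sH * y2)" using T1 h2 by simp
  have c2: "0 \<le> (- sH) * (p - dH * a - dG * b + dG * dH * y2)" using T2 h1 by (simp add: mult_nonpos_nonneg)
  have key: "beta * b + sH * dH * (dG - sG) * y2 \<le> (dH - sH) * p"
  proof -
    have "dH * (p - sH * a - sG * b + sG * sH * y2) + (- sH) * (p - dH * a - dG * b + dG * dH * y2)
        = (dH - sH) * p - (beta * b + sH * dH * (dG - sG) * y2)"
      by (simp add: beta_def algebra_simps)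
    then show ?thesis using c1 c2 by linarith
  qed
  have pos: "0 < dH - sH" using h3 by simp
  show ?thesis
  proof (cases "0 \<le> beta")
    case True
    have "beta * (sH * y2) \<le> beta * b" using bl True by (rule mult_left_mono)
    then have "(dH - sH) * (sH * dG * y2) \<le> (dH - sH) * p"
      using key by (simp add: beta_def algebra_simps)
    then have "sH * dG * y2 \<le> p" using pos by simp
    moreover have "min (sH * dG) (sG * dH) * y2 \<le> sH * dG * y2" using y2_nn by (intro mult_right_mono) auto
    ultimately show ?thesis by (simp add: y2_eq[symmetric] p_def)
  next
    case False
    have "beta * (dH * y2) \<le> beta * b" using bu False by (intro mult_left_mono_neg) auto
    then have "(dH - sH) * (sG * dH * y2) \<le> (dH - sH) * p"
      using key by (simp add: beta_def algebra_simps)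
    then have "sG * dH * y2 \<le> p" using pos by simp
    moreover have "min (sH * dG) (sG * dH) * y2 \<le> sG * dH * y2" using y2_nn by (intro mult_right_mono) auto
    ultimately show ?thesis by (simp add: y2_eq[symmetric] p_def)
  qed
qed

lemma sum_prod_split: "(\<Sum>p\<in>S \<times> T. f p) = (\<Sum>u\<in>S. \<Sum>v\<in>T. f (u, v))"
  by (simp add: sum.cartesian_product)

lemma qf_prod:
  "qf (S \<times> T) (\<lambda>p q. M (fst p) (fst q) * N (snd p) (snd q)) x = P2 S T M N (\<lambda>u v. x (u, v))"
  unfolding qf_def P2_def sum_prod_split by (simp add: mult_ac)

lemma nsq_prod: "nsq (S \<times> T) x = (\<Sum>u\<in>S. nsq T (\<lambda>v. x (u, v)))"
  unfolding nsq_def sum_prod_split ..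

lemma adjm_prod: "adjm (cat_prod_adj E F) = (\<lambda>p q. adjm E (fst p) (fst q) * adjm F (snd p) (snd q))"
  by (auto simp: adjm_def cat_prod_adj_def fun_eq_iff)




definition autg :: "'a set \<Rightarrow> ('a \<Rightarrow> 'a \<Rightarrow> bool) \<Rightarrow> ('a \<Rightarrow> 'a) set" where
  "autg V E = {\<tau>. graph_automorphism V E \<tau> \<and> (\<forall>x. x \<notin> V \<longrightarrow> \<tau> x = x)}"

lemma sg_in: "simple_graph V E \<Longrightarrow> E u v \<Longrightarrow> u \<in> V \<and> v \<in> V"
  by (simp add: simple_graph_def)

lemma sg_sym: "simple_graph V E \<Longrightarrow> E u v \<Longrightarrow> E v u"
  by (simp add: simple_graph_def)

lemma sg_irr: "simple_graph V E \<Longrightarrow> \<not> E u u"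
  by (simp add: simple_graph_def)

lemma sg_fin: "simple_graph V E \<Longrightarrow> finite V"
  by (simp add: simple_graph_def)

lemma aut_bij: "\<tau> \<in> autg V E \<Longrightarrow> bij_betw \<tau> V V"
  by (simp add: autg_def graph_automorphism_def)

lemma aut_out: "\<tau> \<in> autg V E \<Longrightarrow> x \<notin> V \<Longrightarrow> \<tau> x = x"
  by (simp add: autg_def)

lemma aut_in: "\<tau> \<in> autg V E \<Longrightarrow> x \<in> V \<Longrightarrow> \<tau> x \<in> V"
  using aut_bij bij_betwE by blast

lemma aut_E:
  assumes sg: "simple_graph V E" and t: "\<tau> \<in> autg V E"
  shows "E (\<tau> u) (\<tau> v) = E u v"
proof (cases "u \<in> V \<and> v \<in> V")
  case True
  then show ?thesis using t by (simp add: autg_def graph_automorphism_def)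
next
  case False
  then have "u \<notin> V \<or> v \<notin> V" by blast
  then show ?thesis
  proof
    assume u: "u \<notin> V"
    then have "\<tau> u = u" using aut_out[OF t] by simp
    then show ?thesis using u sg_in[OF sg] by metis
  next
    assume v: "v \<notin> V"
    then have "\<tau> v = v" using aut_out[OF t] by simp
    then show ?thesis using v sg_in[OF sg] by metis
  qed
qed

definition autinv :: "'a set \<Rightarrow> ('a \<Rightarrow> 'a) \<Rightarrow> 'a \<Rightarrow> 'a" where
  "autinv V \<tau> = (\<lambda>x. if x \<in> V then inv_into V \<tau> x else x)"

lemma autinv_l:
  assumes "\<tau> \<in> autg V E" shows "autinv V \<tau> (\<tau> x) = x"
proof (cases "x \<in> V")
  case True
  have "inj_on \<tau> V" using aut_bij[OF assms] by (simp add: bij_betw_def)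
  then show ?thesis using True aut_in[OF assms True] by (simp add: autinv_def inv_into_f_f)
next
  case False
  then show ?thesis using aut_out[OF assms False] by (simp add: autinv_def)
qed

lemma autinv_r:
  assumes "\<tau> \<in> autg V E" shows "\<tau> (autinv V \<tau> x) = x"
proof (cases "x \<in> V")
  case True
  have "\<tau> ` V = V" using aut_bij[OF assms] by (simp add: bij_betw_def)
  then show ?thesis using True by (simp add: autinv_def f_inv_into_f)
next
  case False
  then show ?thesis using aut_out[OF assms False] by (simp add: autinv_def)
qed

lemma autinv_mem:
  assumes sg: "simple_graph V E" and t: "\<tau> \<in> autg V E" shows "autinv V \<tau> \<in> autg V E"
proof -
  let ?s = "autinv V \<tau>"
  have b: "bij_betw \<tau> V V" by (rule aut_bij[OF t])
  have "bij_betw ?s V V"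
  proof -
    have "bij_betw (inv_into V \<tau>) V V" using b by (rule bij_betw_inv_into)
    then show ?thesis by (rule bij_betw_cong[THEN iffD1, rotated]) (simp add: autinv_def)
  qed
  moreover have "E (?s u) (?s v) \<longleftrightarrow> E u v" for u v
    using aut_E[OF sg t, of "?s u" "?s v"] autinv_r[OF t] by simp
  moreover have "\<forall>x. x \<notin> V \<longrightarrow> ?s x = x" by (simp add: autinv_def)
  ultimately show ?thesis by (simp add: autg_def graph_automorphism_def)
qed

lemma aut_comp:
  assumes sg: "simple_graph V E" and "\<tau> \<in> autg V E" "\<rho> \<in> autg V E"
  shows "\<rho> \<circ> \<tau> \<in> autg V E"
proof -
  have "bij_betw (\<rho> \<circ> \<tau>) V V" using aut_bij[OF assms(2)] aut_bij[OF assms(3)] by (rule bij_betw_trans)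
  moreover have "E ((\<rho> \<circ> \<tau>) u) ((\<rho> \<circ> \<tau>) v) \<longleftrightarrow> E u v" for u v
    using aut_E[OF sg assms(2)] aut_E[OF sg assms(3)] by simp
  moreover have "\<forall>x. x \<notin> V \<longrightarrow> (\<rho> \<circ> \<tau>) x = x" using aut_out[OF assms(2)] aut_out[OF assms(3)] by simp
  ultimately show ?thesis by (simp add: autg_def graph_automorphism_def)
qed

lemma aut_id: "id \<in> autg V E"
  by (simp add: autg_def graph_automorphism_def bij_betw_id)

lemma aut_finite:
  assumes "finite V" shows "finite (autg V E)"
proof -
  have "autg V E \<subseteq> (\<lambda>f x. if x \<in> V then f x else x) ` (V \<rightarrow>\<^sub>E V)"
  proof
    fix \<tau> assume t: "\<tau> \<in> autg V E"
    have "\<tau> = (\<lambda>x. if x \<in> V then restrict \<tau> V x else x)"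
      using aut_out[OF t] by (auto simp: fun_eq_iff)
    moreover have "restrict \<tau> V \<in> V \<rightarrow>\<^sub>E V" using aut_in[OF t] by auto
    ultimately show "\<tau> \<in> (\<lambda>f x. if x \<in> V then f x else x) ` (V \<rightarrow>\<^sub>E V)" by blast
  qed
  moreover have "finite (V \<rightarrow>\<^sub>E V)" using assms by (intro finite_PiE) auto
  ultimately show ?thesis using finite_subset by blast
qed

lemma aut_reindex:
  assumes sg: "simple_graph V E" and t: "\<tau> \<in> autg V E"
  shows "(\<Sum>\<rho>\<in>autg V E. f (\<rho> \<circ> \<tau>)) = (\<Sum>\<rho>\<in>autg V E. (f \<rho> :: real))"
proof (rule sum.reindex_bij_witness[where i = "\<lambda>\<rho>. \<rho> \<circ> autinv V \<tau>" and j = "\<lambda>\<rho>. \<rho> \<circ> \<tau>"])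
  fix a assume "a \<in> autg V E"
  show "a \<circ> \<tau> \<circ> autinv V \<tau> = a" using autinv_r[OF t] by (auto simp: fun_eq_iff)
  show "a \<circ> \<tau> \<in> autg V E" using aut_comp[OF sg t] \<open>a \<in> autg V E\<close> by blast
  show "f (a \<circ> \<tau>) = f (a \<circ> \<tau>)" ..
next
  fix b assume "b \<in> autg V E"
  show "b \<circ> autinv V \<tau> \<circ> \<tau> = b" using autinv_l[OF t] by (auto simp: fun_eq_iff)
  show "b \<circ> autinv V \<tau> \<in> autg V E" using aut_comp[OF sg autinv_mem[OF sg t]] \<open>b \<in> autg V E\<close> by blast
qed




lemma et_colorable:
  fixes V :: "'a set" and E :: "'a \<Rightarrow> 'a \<Rightarrow> bool"
  assumes sg: "simple_graph V E" and et: "edge_transitive V E"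
    and reg: "\<forall>u\<in>V. (\<exists>v. E u v) \<longrightarrow> card {v\<in>V. E u v} = d"
    and e0: "E u0 v0"
    and an: "nsq V a = 1" and aq: "qf V (adjm E) a = lam"
    and lb: "\<forall>x. lam * nsq V x \<le> qf V (adjm E) x"
  shows "lam < 0" "d > 0" "vector_colorable V E (1 - real d / lam)"
proof -
  have fin: "finite V" using sg by (rule sg_fin)
  let ?A = "adjm E"
  have u0: "u0 \<in> V" and v0: "v0 \<in> V" using sg_in[OF sg e0] by auto
  have uv0: "u0 \<noteq> v0" using e0 sg_irr[OF sg] by auto
  define M0 where "M0 = (\<lambda>u v. 1 * ?A u v + (- lam) * idm u v)"
  have pM0: "psd V M0" unfolding psd_def M0_def qf_lin qf_idm[OF fin] using lb by (auto simp: algebra_simps)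
  have sM0: "\<forall>u\<in>V. \<forall>v\<in>V. M0 u v = M0 v u"
    using sg_sym[OF sg] by (auto simp: M0_def adjm_def idm_def)
  have qM0: "qf V M0 a = 0" unfolding M0_def qf_lin qf_idm[OF fin] using an aq by simp
  have eig: "(\<Sum>v\<in>V. ?A u v * a v) = lam * a u" if u: "u \<in> V" for u
  proof -
    have "0 = (\<Sum>v\<in>V. M0 u v * a v)" using psd_null[OF fin sM0 pM0 qM0 u] by simp
    also have "\<dots> = (\<Sum>v\<in>V. ?A u v * a v) - lam * (\<Sum>v\<in>V. idm u v * a v)"
      by (simp add: M0_def algebra_simps sum_subtractf sum_distrib_left)
    also have "(\<Sum>v\<in>V. idm u v * a v) = a u" by (rule idm_collapse[OF fin u])
    finally show ?thesis by simp
  qed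
  define ee where "ee = (\<lambda>(w::'a) z. if z = w then (1::real) else 0)"
  define x0 where "x0 = (\<lambda>z. ee u0 z - ee v0 z)"
  have inner: "(\<Sum>v\<in>V. ?A u v * x0 v) = ?A u u0 - ?A u v0" for u
  proof -
    have "(\<Sum>v\<in>V. ?A u v * x0 v) = (\<Sum>v\<in>V. ?A u v * ee u0 v) - (\<Sum>v\<in>V. ?A u v * ee v0 v)"
      by (simp add: x0_def algebra_simps sum_subtractf)
    then show ?thesis using sum_single[OF fin u0, of "?A u"] sum_single[OF fin v0, of "?A u"]
      by (simp add: ee_def)
  qed
  have "qf V ?A x0 = (\<Sum>u\<in>V. x0 u * (\<Sum>v\<in>V. ?A u v * x0 v))"
    unfolding qf_def by (simp add: sum_distrib_left mult_ac)
  also have "\<dots> = (\<Sum>u\<in>V. (?A u u0 - ?A u v0) * ee u0 u) - (\<Sum>u\<in>V. (?A u u0 - ?A u v0) * ee v0 u)"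
    by (simp only: inner, unfold x0_def sum_subtractf[symmetric]) (intro sum.cong refl, simp add: algebra_simps)
  also have "\<dots> = -2"
    using sum_single[OF fin u0, of "\<lambda>u. ?A u u0 - ?A u v0"] sum_single[OF fin v0, of "\<lambda>u. ?A u u0 - ?A u v0"]
      e0 sg_sym[OF sg e0] sg_irr[OF sg, of u0] sg_irr[OF sg, of v0]
    by (simp add: ee_def adjm_def)
  finally have q0: "qf V ?A x0 = -2" .
  have "nsq V x0 = (\<Sum>u\<in>V. x0 u * ee u0 u) - (\<Sum>u\<in>V. x0 u * ee v0 u)"
    unfolding nsq_def power2_eq_square sum_subtractf[symmetric] by (intro sum.cong refl) (simp add: x0_def algebra_simps)
  also have "\<dots> = 2"
    using sum_single[OF fin u0, of x0] sum_single[OF fin v0, of x0] uv0 by (simp add: ee_def x0_def)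
  finally have n0: "nsq V x0 = 2" .
  have "lam * 2 \<le> -2" using lb q0 n0 by metis
  then show lneg: "lam < 0" by simp
  have deg0: "card {v\<in>V. E u0 v} = d" using reg u0 e0 by blast
  have "v0 \<in> {v\<in>V. E u0 v}" using v0 e0 by simp
  then have "card {v\<in>V. E u0 v} > 0" using fin by (auto simp: card_gt_0_iff)
  then show dpos: "d > 0" using deg0 by simp
  \<comment> \<open>averaged Gram matrix\<close>
  define \<Gamma> where "\<Gamma> = autg V E"
  have fG: "finite \<Gamma>" unfolding \<Gamma>_def by (rule aut_finite[OF fin])
  have idG: "id \<in> \<Gamma>" unfolding \<Gamma>_def by (rule aut_id)
  define M where "M = (\<lambda>u v. \<Sum>\<rho>\<in>\<Gamma>. a (\<rho> u) * a (\<rho> v))"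
  have Msym: "M u v = M v u" for u v by (simp add: M_def mult.commute)
  have Minv: "M (\<tau> u) (\<tau> v) = M u v" if t: "\<tau> \<in> \<Gamma>" for \<tau> u v
    unfolding M_def using aut_reindex[OF sg t[unfolded \<Gamma>_def], of "\<lambda>\<rho>. a (\<rho> u) * a (\<rho> v)"]
    by (simp add: \<Gamma>_def)
  define c where "c = M u0 v0"
  have Mc: "M x y = c" if xy: "E x y" for x y
  proof -
    obtain \<sigma> where s: "graph_automorphism V E \<sigma>" "\<sigma> ` {u0, v0} = {x, y}"
      using et e0 xy unfolding edge_transitive_def by blast
    define \<tau> where "\<tau> = (\<lambda>z. if z \<in> V then \<sigma> z else z)"
    have "bij_betw \<tau> V V" using s(1) unfolding graph_automorphism_def
      by (metis (mono_tags, lifting) \<tau>_def bij_betw_cong)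
    moreover have "\<forall>u\<in>V. \<forall>v\<in>V. E (\<tau> u) (\<tau> v) = E u v" using s(1) by (simp add: \<tau>_def graph_automorphism_def)
    ultimately have tG: "\<tau> \<in> \<Gamma>" by (simp add: \<Gamma>_def autg_def graph_automorphism_def \<tau>_def)
    have im: "{\<tau> u0, \<tau> v0} = {x, y}" using s(2) u0 v0 by (simp add: \<tau>_def)
    have "x \<noteq> y" using xy sg_irr[OF sg] by auto
    then have "(\<tau> u0 = x \<and> \<tau> v0 = y) \<or> (\<tau> u0 = y \<and> \<tau> v0 = x)" using im by (auto simp: doubleton_eq_iff)
    then show ?thesis
    proof
      assume "\<tau> u0 = x \<and> \<tau> v0 = y"
      then show ?thesis using Minv[OF tG, of u0 v0] by (simp add: c_def)
    next
      assume "\<tau> u0 = y \<and> \<tau> v0 = x"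
      then show ?thesis using Minv[OF tG, of u0 v0] Msym[of x y] by (simp add: c_def)
    qed
  qed
  have row: "(\<Sum>v\<in>V. ?A u v * M u v) = lam * M u u" if u: "u \<in> V" for u
  proof -
    have inner: "(\<Sum>v\<in>V. ?A u v * a (\<rho> v)) = lam * a (\<rho> u)" if r: "\<rho> \<in> \<Gamma>" for \<rho>
    proof -
      have rb: "bij_betw \<rho> V V" using r aut_bij by (auto simp: \<Gamma>_def)
      have "(\<Sum>v\<in>V. ?A u v * a (\<rho> v)) = (\<Sum>v\<in>V. ?A (\<rho> u) (\<rho> v) * a (\<rho> v))"
        using aut_E[OF sg r[unfolded \<Gamma>_def]] by (simp add: adjm_def)
      also have "\<dots> = (\<Sum>w\<in>V. ?A (\<rho> u) w * a w)"
        by (rule sum.reindex_bij_betw[OF rb, of "\<lambda>w. ?A (\<rho> u) w * a w"])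
      also have "\<dots> = lam * a (\<rho> u)" using eig aut_in[OF r[unfolded \<Gamma>_def] u] by blast
      finally show ?thesis .
    qed
    have "(\<Sum>v\<in>V. ?A u v * M u v) = (\<Sum>\<rho>\<in>\<Gamma>. a (\<rho> u) * (\<Sum>v\<in>V. ?A u v * a (\<rho> v)))"
      unfolding M_def by (simp add: sum_distrib_left sum.swap[of _ V] mult_ac)
    also have "\<dots> = (\<Sum>\<rho>\<in>\<Gamma>. lam * (a (\<rho> u) * a (\<rho> u)))"
      using inner by (intro sum.cong refl) simp
    also have "\<dots> = lam * M u u" by (simp add: M_def sum_distrib_left)
    finally show ?thesis .
  qed
  define N where "N = {u\<in>V. \<exists>v. E u v}"
  have MN: "lam * M u u = real d * c" if u: "u \<in> N" for u
  proof -
    have uV: "u \<in> V" using u by (simp add: N_def)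
    have "(\<Sum>v\<in>V. ?A u v * M u v) = (\<Sum>v\<in>V. ?A u v * c)"
      by (intro sum.cong refl) (auto simp: adjm_def Mc)
    also have "\<dots> = real (card {v\<in>V. E u v}) * c" by (simp add: sum_distrib_right[symmetric] deg_sum[OF fin])
    also have "card {v\<in>V. E u v} = d" using reg u by (auto simp: N_def)
    finally show ?thesis using row[OF uV] by simp
  qed
  have iso: "M u u = 0" if u: "u \<in> V" "u \<notin> N" for u
  proof -
    have "a (\<rho> u) = 0" if r: "\<rho> \<in> \<Gamma>" for \<rho>
    proof -
      have rV: "\<rho> u \<in> V" using aut_in r u by (auto simp: \<Gamma>_def)
      have "\<not> E (\<rho> u) w" for w
      proof
        assume ew: "E (\<rho> u) w"
        then have "w \<in> V" using sg_in[OF sg] by blast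
        then obtain w' where "w' \<in> V" "w = \<rho> w'" using aut_bij r unfolding \<Gamma>_def
          by (metis bij_betw_imp_surj_on imageE)
        then have "E u w'" using ew aut_E[OF sg r[unfolded \<Gamma>_def]] by simp
        then show False using u by (auto simp: N_def)
      qed
      then have "(\<Sum>v\<in>V. ?A (\<rho> u) v * a v) = 0" by (simp add: adjm_def)
      then show ?thesis using eig[OF rV] lneg by simp
    qed
    then show ?thesis by (simp add: M_def)
  qed
  have trace: "(\<Sum>u\<in>V. M u u) = real (card \<Gamma>)"
  proof -
    have "(\<Sum>u\<in>V. M u u) = (\<Sum>\<rho>\<in>\<Gamma>. \<Sum>u\<in>V. a (\<rho> u) * a (\<rho> u))"
      unfolding M_def by (rule sum.swap)
    also have "\<dots> = (\<Sum>\<rho>\<in>\<Gamma>. 1)"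
    proof (intro sum.cong refl)
      fix \<rho> assume r: "\<rho> \<in> \<Gamma>"
      have rb: "bij_betw \<rho> V V" using r aut_bij by (auto simp: \<Gamma>_def)
      show "(\<Sum>u\<in>V. a (\<rho> u) * a (\<rho> u)) = 1"
        using sum.reindex_bij_betw[OF rb, of "\<lambda>w. a w * a w"] an by (simp add: nsq_def power2_eq_square)
    qed
    finally show ?thesis by simp
  qed
  have Mnn: "0 \<le> M u u" for u unfolding M_def by (intro sum_nonneg) simp
  have "\<exists>u\<in>V. M u u > 0"
  proof (rule ccontr)
    assume "\<not> ?thesis"
    then have "\<forall>u\<in>V. M u u = 0" using Mnn by (metis less_eq_real_def)
    then have "(\<Sum>u\<in>V. M u u) = 0" by simp
    moreover have "card \<Gamma> > 0" using fG idG by (auto simp: card_gt_0_iff)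
    ultimately show False using trace by simp
  qed
  then obtain u1 where u1: "u1 \<in> V" "M u1 u1 > 0" by blast
  have u1N: "u1 \<in> N" using iso u1 by force
  define \<mu> where "\<mu> = real d * c / lam"
  have MNmu: "M u u = \<mu>" if "u \<in> N" for u using MN[OF that] lneg by (simp add: \<mu>_def field_simps)
  have mupos: "\<mu> > 0" using MNmu[OF u1N] u1 by simp
  define m where "m = card \<Gamma>"
  obtain g where g: "bij_betw g {..<m} \<Gamma>"
    using ex_bij_betw_nat_finite[OF fG] by (auto simp: m_def atLeast0LessThan)
  have Msum: "(\<Sum>i<m. a (g i u) * a (g i v)) = M u v" for u v
    unfolding M_def using sum.reindex_bij_betw[OF g, of "\<lambda>\<rho>. a (\<rho> u) * a (\<rho> v)"] by simp
  define \<phi> where "\<phi> = (\<lambda>u i. if u \<in> N then (if i < m then a (g i u) / sqrt \<mu> else 0)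
                                else (if i = m then 1 else (0::real)))"
  define k where "k = 1 - real d / lam"
  have kgt: "k > 1" using lneg dpos by (simp add: k_def divide_pos_neg)
  have sq: "sqrt \<mu> * sqrt \<mu> = \<mu>" using mupos by simp
  have unit: "(\<Sum>i<Suc m. (\<phi> u i)^2) = 1" if u: "u \<in> V" for u
  proof (cases "u \<in> N")
    case True
    have "(\<Sum>i<Suc m. (\<phi> u i)^2) = (\<Sum>i<m. a (g i u) * a (g i u)) / \<mu>"
      using True sq by (simp add: \<phi>_def power2_eq_square sum_divide_distrib)
    also have "\<dots> = 1" using Msum MNmu[OF True] mupos by simp
    finally show ?thesis .
  next
    case False
    then show ?thesis by (simp add: \<phi>_def)
  qed
  have edge: "(\<Sum>i<Suc m. \<phi> u i * \<phi> v i) \<le> - 1 / (k - 1)" if e: "E u v" for u v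
  proof -
    have uN: "u \<in> N" and vN: "v \<in> N" using e sg_in[OF sg e] sg_sym[OF sg e] by (auto simp: N_def)
    have "(\<Sum>i<Suc m. \<phi> u i * \<phi> v i) = (\<Sum>i<m. a (g i u) * a (g i v)) / \<mu>"
      using uN vN sq by (simp add: \<phi>_def sum_divide_distrib)
    also have "\<dots> = c / \<mu>" using Msum Mc[OF e] by simp
    also have "\<dots> = lam / real d"
    proof -
      have cne: "c \<noteq> 0" using mupos by (auto simp: \<mu>_def)
      then show ?thesis using dpos lneg by (simp add: \<mu>_def field_simps)
    qed
    also have "\<dots> = - 1 / (k - 1)" using dpos lneg by (simp add: k_def field_simps)
    finally show ?thesis by simp
  qed
  have "vector_coloring V E k (Suc m) \<phi>"
    unfolding vector_coloring_def using unit edge by (auto simp: \<phi>_def)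
  then show "vector_colorable V E (1 - real d / lam)" using kgt by (auto simp: vector_colorable_def k_def)
qed




definition bip :: "('a \<Rightarrow> 'a \<Rightarrow> bool) \<Rightarrow> bool" where
  "bip E \<longleftrightarrow> (\<exists>s::'a \<Rightarrow> bool. \<forall>u v. E u v \<longrightarrow> s u \<noteq> s v)"

lemma bip_colorable:
  assumes "bip E" shows "vector_colorable V E 2"
proof -
  obtain s :: "'a \<Rightarrow> bool" where s: "\<forall>u v. E u v \<longrightarrow> s u \<noteq> s v" using assms unfolding bip_def by blast
  define \<phi> where "\<phi> = (\<lambda>u (i::nat). if i = 0 then (if s u then 1 else -1) else (0::real))"
  have "vector_coloring V E 2 1 \<phi>"
    unfolding vector_coloring_def
  proof (intro conjI ballI impI allI)
    fix u v assume "E u v"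
    then have "s u \<noteq> s v" using s by blast
    then show "(\<Sum>i<1. \<phi> u i * \<phi> v i) \<le> - 1 / (2 - 1)" by (cases "s u") (auto simp: \<phi>_def)
  qed (auto simp: \<phi>_def)
  then show ?thesis by (auto simp: vector_colorable_def)
qed

lemma col_ge2:
  assumes vc: "vector_coloring S E' k d \<phi>" and k: "k > 1" and uv: "u \<in> S" "v \<in> S" "E' u v"
  shows "2 \<le> k"
proof -
  have un: "(\<Sum>i<d. (\<phi> u i)^2) = 1" "(\<Sum>i<d. (\<phi> v i)^2) = 1"
    and ed: "(\<Sum>i<d. \<phi> u i * \<phi> v i) \<le> - 1 / (k - 1)"
    using vc uv unfolding vector_coloring_def by auto
  have "0 \<le> (\<Sum>i<d. (\<phi> u i + \<phi> v i)^2)" by (intro sum_nonneg) auto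
  also have "\<dots> = (\<Sum>i<d. (\<phi> u i)^2) + (\<Sum>i<d. (\<phi> v i)^2) + 2 * (\<Sum>i<d. \<phi> u i * \<phi> v i)"
    by (simp add: power2_sum sum.distrib sum_distrib_left mult.assoc)
  finally have "-1 \<le> (\<Sum>i<d. \<phi> u i * \<phi> v i)" using un by simp
  with ed have "-1 \<le> - 1 / (k - 1)" by linarith
  then have "1 / (k - 1) \<le> 1" by simp
  then show ?thesis using k by (simp add: divide_le_eq)
qed

lemma deg_aut:
  assumes sg: "simple_graph V E" and ga: "graph_automorphism V E \<sigma>" and x: "x \<in> V"
  shows "card {v\<in>V. E (\<sigma> x) v} = card {v\<in>V. E x v}"
proof -
  have b: "bij_betw \<sigma> V V" and pr: "\<forall>u\<in>V. \<forall>v\<in>V. E (\<sigma> u) (\<sigma> v) = E u v"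
    using ga by (auto simp: graph_automorphism_def)
  have "\<sigma> ` {v\<in>V. E x v} = {v\<in>V. E (\<sigma> x) v}"
  proof
    show "\<sigma> ` {v\<in>V. E x v} \<subseteq> {v\<in>V. E (\<sigma> x) v}" using pr x b bij_betwE by fastforce
    show "{v\<in>V. E (\<sigma> x) v} \<subseteq> \<sigma> ` {v\<in>V. E x v}"
    proof
      fix w assume w: "w \<in> {v\<in>V. E (\<sigma> x) v}"
      then obtain w' where "w' \<in> V" "w = \<sigma> w'" using b by (metis (no_types, lifting) bij_betw_imp_surj_on imageE mem_Collect_eq)
      then show "w \<in> \<sigma> ` {v\<in>V. E x v}" using w pr x by auto
    qed
  qed
  moreover have "inj_on \<sigma> {v\<in>V. E x v}" using b by (auto simp: bij_betw_def intro: inj_on_subset)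
  ultimately show ?thesis by (metis card_image)
qed

lemma et_regular:
  assumes sg: "simple_graph V E" and et: "edge_transitive V E" and nb: "\<not> bip E"
  shows "\<exists>d. \<forall>u\<in>V. (\<exists>v. E u v) \<longrightarrow> card {v\<in>V. E u v} = d"
proof (cases "\<exists>u v. E u v")
  case False
  then show ?thesis by auto
next
  case True
  then obtain u0 v0 where e0: "E u0 v0" by blast
  define deg where "deg = (\<lambda>x. card {v\<in>V. E x v})"
  have u0: "u0 \<in> V" and v0: "v0 \<in> V" using sg_in[OF sg e0] by auto
  have ed: "(deg x = deg u0 \<and> deg y = deg v0) \<or> (deg x = deg v0 \<and> deg y = deg u0)" if xy: "E x y" for x y
  proof -
    obtain \<sigma> where s: "graph_automorphism V E \<sigma>" "\<sigma> ` {u0, v0} = {x, y}"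
      using et e0 xy unfolding edge_transitive_def by blast
    have "x \<noteq> y" using xy sg_irr[OF sg] by auto
    then have "(\<sigma> u0 = x \<and> \<sigma> v0 = y) \<or> (\<sigma> u0 = y \<and> \<sigma> v0 = x)" using s(2) by (auto simp: doubleton_eq_iff)
    then show ?thesis using deg_aut[OF sg s(1) u0] deg_aut[OF sg s(1) v0] by (auto simp: deg_def)
  qed
  show ?thesis
  proof (cases "deg u0 = deg v0")
    case True
    then show ?thesis using ed by (metis deg_def)
  next
    case False
    have "bip E" unfolding bip_def
    proof (intro exI allI impI)
      fix x y assume "E x y"
      then show "(deg x = deg u0) \<noteq> (deg y = deg u0)" using ed False by metis
    qed
    then show ?thesis using nb by simp
  qed
qed

lemma et_cases:
  fixes V :: "'a set" and E :: "'a \<Rightarrow> 'a \<Rightarrow> bool"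
  assumes sg: "simple_graph V E" and et: "edge_transitive V E" and e0: "E u0 v0"
  shows "bip E \<or> (\<exists>d lam x. 0 < d \<and> lam < 0 \<and> vector_colorable V E (1 - real d / lam)
     \<and> (\<forall>y. lam * nsq V y \<le> qf V (adjm E) y) \<and> (\<forall>y. qf V (adjm E) y \<le> real d * nsq V y)
     \<and> (\<forall>u. 0 \<le> x u) \<and> 0 < nsq V x \<and> qf V (adjm E) x = real d * nsq V x)"
proof (cases "bip E")
  case True then show ?thesis by simp
next
  case False
  have fin: "finite V" by (rule sg_fin[OF sg])
  have u0: "u0 \<in> V" using sg_in[OF sg e0] by simp
  obtain d where reg: "\<forall>u\<in>V. (\<exists>v. E u v) \<longrightarrow> card {v\<in>V. E u v} = d"
    using et_regular[OF sg et False] by blast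
  obtain a lam where a: "nsq V a = 1" "qf V (adjm E) a = lam" "\<forall>x. lam * nsq V x \<le> qf V (adjm E) x"
    using min_eig[OF fin, of "adjm E"] u0 by blast
  note ec = et_colorable[OF sg et reg e0 a(1) a(2) a(3)]
  have degle: "\<forall>u\<in>V. real (card {v\<in>V. E u v}) \<le> real d"
  proof
    fix u assume u: "u \<in> V"
    show "real (card {v\<in>V. E u v}) \<le> real d"
    proof (cases "\<exists>v. E u v")
      case True then show ?thesis using reg u by simp
    next
      case False then have "{v\<in>V. E u v} = {}" by auto
      then have "card {v\<in>V. E u v} = 0" by (simp only: card.empty)
      then show ?thesis by simp
    qed
  qed
  have ub: "\<forall>y. qf V (adjm E) y \<le> real d * nsq V y"
    using deg_bound[OF fin _ degle] sg_sym[OF sg] by blast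
  define N where "N = {u\<in>V. \<exists>v. E u v}"
  define x where "x = (\<lambda>u. if u \<in> N then (1::real) else 0)"
  have xnn: "\<forall>u. 0 \<le> x u" by (simp add: x_def)
  have nx: "nsq V x = (\<Sum>u\<in>V. x u)" unfolding nsq_def by (intro sum.cong refl) (simp add: x_def)
  have "u0 \<in> N" using u0 e0 by (auto simp: N_def)
  then have x1: "x u0 = 1" by (simp add: x_def)
  have "x u0 \<le> (\<Sum>u\<in>V. x u)" by (rule member_le_sum) (use u0 fin in \<open>auto simp: x_def\<close>)
  then have "0 < (\<Sum>u\<in>V. x u)" using x1 by simp
  then have npos: "0 < nsq V x" using nx by simp
  have qx: "qf V (adjm E) x = real d * nsq V x"
  proof -
    have inner: "x u * (\<Sum>v\<in>V. adjm E u v * x v) = real d * x u" if u: "u \<in> V" for u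
    proof (cases "u \<in> N")
      case True
      have "(\<Sum>v\<in>V. adjm E u v * x v) = (\<Sum>v\<in>V. adjm E u v)"
        by (intro sum.cong refl) (auto simp: adjm_def x_def N_def dest: sg_sym[OF sg])
      also have "\<dots> = real d" using deg_sum[OF fin] reg u True by (simp add: N_def)
      finally show ?thesis by (simp add: x_def True)
    next
      case False then show ?thesis by (simp add: x_def)
    qed
    have "qf V (adjm E) x = (\<Sum>u\<in>V. x u * (\<Sum>v\<in>V. adjm E u v * x v))"
      unfolding qf_def by (simp add: sum_distrib_left mult_ac)
    also have "\<dots> = (\<Sum>u\<in>V. real d * x u)" by (intro sum.cong refl inner)
    finally show ?thesis using nx by (simp add: sum_distrib_left)
  qed
  show ?thesis using ec ub a(3) xnn npos qx by blast
qed




lemma P2_sep: "P2 S T M N (\<lambda>u v. x u * y v) = qf S M x * qf T N y"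
proof -
  have "qf S M x * qf T N y = (\<Sum>u\<in>S. \<Sum>u'\<in>S. M u u' * x u * x u' * qf T N y)"
    unfolding qf_def[of S] by (simp add: sum_distrib_right)
  also have "\<dots> = (\<Sum>u\<in>S. \<Sum>u'\<in>S. \<Sum>v\<in>T. \<Sum>v'\<in>T. M u u' * x u * x u' * (N v v' * y v * y v'))"
    unfolding qf_def[of T] by (simp add: sum_distrib_left)
  also have "\<dots> = P2 S T M N (\<lambda>u v. x u * y v)"
    unfolding P2_def
    apply (rule sum.cong[OF refl])
    apply (rule trans[OF sum.swap])
    apply (rule sum.cong[OF refl])
    apply (rule sum.cong[OF refl])
    apply (rule sum.cong[OF refl])
    apply (simp add: mult_ac)
    done
  finally show ?thesis by simp
qed

lemma nsq_sep: "nsq (S \<times> T) (\<lambda>p. x (fst p) * y (snd p)) = nsq S x * nsq T y"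
  unfolding nsq_def sum_prod_split by (simp add: sum_product power_mult_distrib)

lemma vc_fst:
  assumes "vector_colorable V E k" shows "vector_colorable (V \<times> W) (cat_prod_adj E F) k"
proof -
  obtain d \<phi> where "vector_coloring V E k d \<phi>" "k > 1" using assms by (auto simp: vector_colorable_def)
  then have "vector_coloring (V \<times> W) (cat_prod_adj E F) k d (\<lambda>p. \<phi> (fst p))"
    by (auto simp: vector_coloring_def cat_prod_adj_def)
  then show ?thesis using \<open>k > 1\<close> by (auto simp: vector_colorable_def)
qed

lemma vc_snd:
  assumes "vector_colorable W F k" shows "vector_colorable (V \<times> W) (cat_prod_adj E F) k"
proof -
  obtain d \<phi> where "vector_coloring W F k d \<phi>" "k > 1" using assms by (auto simp: vector_colorable_def)
  then have "vector_coloring (V \<times> W) (cat_prod_adj E F) k d (\<lambda>p. \<phi> (snd p))"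
    by (auto simp: vector_coloring_def cat_prod_adj_def)
  then show ?thesis using \<open>k > 1\<close> by (auto simp: vector_colorable_def)
qed

lemma K_bdd: "bdd_below {k. vector_colorable S E' k}"
  by (rule bdd_belowI[of _ 1]) (auto simp: vector_colorable_def)

lemma K_lower: "vector_colorable S E' k \<Longrightarrow> Inf {k. vector_colorable S E' k} \<le> k"
  by (rule cInf_lower[OF _ K_bdd]) simp

lemma K_ge1: "{k. vector_colorable S E' k} \<noteq> {} \<Longrightarrow> 1 \<le> Inf {k. vector_colorable S E' k}"
  by (rule cInf_greatest) (auto simp: vector_colorable_def)

lemma et_nonempty:
  assumes "simple_graph V E" "edge_transitive V E" "E u0 v0"
  shows "\<exists>k. vector_colorable V E k"
  using et_cases[OF assms] bip_colorable by blast

lemma div_step: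
  assumes "(0::real) < d" "l < 0" "d \<le> (k - 1) * (- l)"
  shows "1 - d / l \<le> k"
proof -
  have pos: "0 < - l" using assms(2) by simp
  have "d / (- l) \<le> k - 1" using pos_divide_le_eq[OF pos] assms(3) by blast
  moreover have "d / l = - (d / (- l))" by simp
  ultimately show ?thesis by linarith
qed

lemma qf_catprod:
  "qf (S \<times> T) (adjm (cat_prod_adj E F)) y = P2 S T (adjm E) (adjm F) (\<lambda>u v. y (u, v))"
  unfolding adjm_prod by (rule qf_prod)

lemma has_edge_iff:
  assumes sg: "simple_graph V E"
  shows "(\<exists>u\<in>V. \<exists>v\<in>V. E u v) \<longleftrightarrow> (\<exists>u v. E u v)"
proof
  assume "\<exists>u v. E u v"
  then obtain u v where e: "E u v" by blast
  then have "u \<in> V \<and> v \<in> V" by (rule sg_in[OF sg])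
  then show "\<exists>u\<in>V. \<exists>v\<in>V. E u v" using e by blast
qed blast

theorem corollary5p6:
  fixes V :: "'a set" and E :: "'a \<Rightarrow> 'a \<Rightarrow> bool"
    and W :: "'b set" and F :: "'b \<Rightarrow> 'b \<Rightarrow> bool"
  assumes "simple_graph V E" and "simple_graph W F"
    and "edge_transitive V E" and "edge_transitive W F"
  shows "chi_vec (V \<times> W) (cat_prod_adj E F) = min (chi_vec V E) (chi_vec W F)"
proof -
  note sgG = assms(1) and sgH = assms(2) and etG = assms(3) and etH = assms(4)
  have fV: "finite V" and fW: "finite W" using sg_fin sgG sgH by auto
  have sgP: "simple_graph (V \<times> W) (cat_prod_adj E F)"
    using sgG sgH by (auto simp: simple_graph_def cat_prod_adj_def)
  define KG where "KG = {k. vector_colorable V E k}"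
  define KH where "KH = {k. vector_colorable W F k}"
  define KP where "KP = {k. vector_colorable (V \<times> W) (cat_prod_adj E F) k}"
  have chiG: "chi_vec V E = (if \<exists>u v. E u v then Inf KG else 1)"
    unfolding chi_vec_def KG_def has_edge_iff[OF sgG] ..
  have chiH: "chi_vec W F = (if \<exists>u v. F u v then Inf KH else 1)"
    unfolding chi_vec_def KH_def has_edge_iff[OF sgH] ..
  have chiP: "chi_vec (V \<times> W) (cat_prod_adj E F) = (if \<exists>p q. cat_prod_adj E F p q then Inf KP else 1)"
    unfolding chi_vec_def KP_def has_edge_iff[OF sgP] ..
  have edgeP: "(\<exists>p q. cat_prod_adj E F p q) \<longleftrightarrow> (\<exists>u v. E u v) \<and> (\<exists>u v. F u v)"
    by (auto simp: cat_prod_adj_def)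
  have neG: "KG \<noteq> {}" if "E u0 v0" for u0 v0
    using et_nonempty[OF sgG etG that] by (auto simp: KG_def)
  have neH: "KH \<noteq> {}" if "F u0 v0" for u0 v0
    using et_nonempty[OF sgH etH that] by (auto simp: KH_def)
  show ?thesis
  proof (cases "(\<exists>u v. E u v) \<and> (\<exists>u v. F u v)")
    case False
    then have "\<not> (\<exists>p q. cat_prod_adj E F p q)" using edgeP by blast
    then have c1: "chi_vec (V \<times> W) (cat_prod_adj E F) = 1" using chiP by simp
    have g1: "1 \<le> chi_vec V E"
      using chiG neG K_ge1[of V E] by (auto simp: KG_def)
    have h1: "1 \<le> chi_vec W F"
      using chiH neH K_ge1[of W F] by (auto simp: KH_def)
    have "chi_vec V E = 1 \<or> chi_vec W F = 1" using False chiG chiH by auto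
    then show ?thesis using c1 g1 h1 by auto
  next
    case True
    then obtain u0 v0 w0 z0 where e0: "E u0 v0" and f0: "F w0 z0" by blast
    have cG: "chi_vec V E = Inf KG" using chiG e0 by auto
    have cH: "chi_vec W F = Inf KH" using chiH f0 by auto
    have cP: "chi_vec (V \<times> W) (cat_prod_adj E F) = Inf KP" using chiP edgeP True by auto
    have GP: "KG \<subseteq> KP" using vc_fst by (auto simp: KG_def KP_def)
    have HP: "KH \<subseteq> KP" using vc_snd by (auto simp: KH_def KP_def)
    have le1: "Inf KP \<le> Inf KG"
      by (rule cInf_superset_mono[OF neG[OF e0] _ GP]) (simp add: KP_def K_bdd)
    have le2: "Inf KP \<le> Inf KH"
      by (rule cInf_superset_mono[OF neH[OF f0] _ HP]) (simp add: KP_def K_bdd)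
    have neP: "KP \<noteq> {}" using neG[OF e0] GP by blast
    have pe: "cat_prod_adj E F (u0, w0) (v0, z0)" using e0 f0 by (simp add: cat_prod_adj_def)
    have pin: "(u0, w0) \<in> V \<times> W" "(v0, z0) \<in> V \<times> W"
      using sg_in[OF sgG e0] sg_in[OF sgH f0] by auto
    have ge: "min (Inf KG) (Inf KH) \<le> k" if kP: "k \<in> KP" for k
    proof -
      obtain D \<psi> where vc: "vector_coloring (V \<times> W) (cat_prod_adj E F) k D \<psi>" and k1: "k > 1"
        using kP by (auto simp: KP_def vector_colorable_def)
      have k2: "2 \<le> k" using col_ge2[OF vc k1 pin pe] .
      show ?thesis
      proof (cases "bip E \<or> bip F")
        case True
        then show ?thesis
        proof
          assume "bip E"
          then have "Inf KG \<le> 2" using K_lower[OF bip_colorable[OF \<open>bip E\<close>]] by (simp add: KG_def)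
          then show ?thesis using k2 by linarith
        next
          assume "bip F"
          then have "Inf KH \<le> 2" using K_lower[OF bip_colorable[OF \<open>bip F\<close>]] by (simp add: KH_def)
          then show ?thesis using k2 by linarith
        qed
      next
        case False
        obtain dG lG xG where G: "0 < dG" "lG < 0" "vector_colorable V E (1 - real dG / lG)"
          "\<forall>y. lG * nsq V y \<le> qf V (adjm E) y" "\<forall>y. qf V (adjm E) y \<le> real dG * nsq V y"
          "\<forall>u. 0 \<le> xG u" "0 < nsq V xG" "qf V (adjm E) xG = real dG * nsq V xG"
          using et_cases[OF sgG etG e0] False by blast
        obtain dH lH xH where H: "0 < dH" "lH < 0" "vector_colorable W F (1 - real dH / lH)"
          "\<forall>y. lH * nsq W y \<le> qf W (adjm F) y" "\<forall>y. qf W (adjm F) y \<le> real dH * nsq W y"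
          "\<forall>u. 0 \<le> xH u" "0 < nsq W xH" "qf W (adjm F) xH = real dH * nsq W xH"
          using et_cases[OF sgH etH f0] False by blast
        define m where "m = min (lH * real dG) (lG * real dH)"
        have symF: "\<forall>u\<in>W. \<forall>v\<in>W. adjm F u v = adjm F v u"
          using sg_sym[OF sgH] by (auto simp: adjm_def)
        have pb: "\<forall>y. - (- m) * nsq (V \<times> W) y \<le> qf (V \<times> W) (adjm (cat_prod_adj E F)) y"
        proof
          fix y :: "'a \<times> 'b \<Rightarrow> real"
          have "m * (\<Sum>u\<in>V. nsq W (\<lambda>v. y (u, v))) \<le> P2 V W (adjm E) (adjm F) (\<lambda>u v. y (u, v))"
            unfolding m_def
            by (rule prod_bound[OF fV fW symF G(4) G(5) H(4) H(5)]) (use H(1) H(2) in auto)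
          then show "- (- m) * nsq (V \<times> W) y \<le> qf (V \<times> W) (adjm (cat_prod_adj E F)) y"
            unfolding qf_catprod nsq_prod minus_minus .
        qed
        define X where "X = (\<lambda>p. xG (fst p) * xH (snd p))"
        have Xnn: "\<forall>p\<in>V \<times> W. 0 \<le> X p" using G(6) H(6) by (simp add: X_def)
        have hf: "qf (V \<times> W) (adjm (cat_prod_adj E F)) X \<le> (k - 1) * (- m) * nsq (V \<times> W) X"
          by (rule hoffman[OF _ vc k1 pb Xnn]) (use fV fW in simp)
        have qX: "qf (V \<times> W) (adjm (cat_prod_adj E F)) X = real dG * real dH * (nsq V xG * nsq W xH)"
          unfolding qf_catprod X_def using P2_sep[of V W "adjm E" "adjm F" xG xH] G(8) H(8)
          by (simp add: mult_ac)
        have nX: "nsq (V \<times> W) X = nsq V xG * nsq W xH" unfolding X_def by (rule nsq_sep)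
        have npos: "0 < nsq V xG * nsq W xH" using G(7) H(7) by simp
        have "real dG * real dH * (nsq V xG * nsq W xH) \<le> ((k - 1) * (- m)) * (nsq V xG * nsq W xH)"
          using hf qX nX by (simp add: mult_ac)
        then have key: "real dG * real dH \<le> (k - 1) * (- m)" using npos by (rule mult_right_le_imp_le)
        show ?thesis
        proof (cases "lH * real dG \<le> lG * real dH")
          case True
          then have "m = lH * real dG" by (simp add: m_def)
          then have "real dG * real dH \<le> real dG * ((k - 1) * (- lH))" using key by (simp add: mult_ac)
          then have "real dH \<le> (k - 1) * (- lH)" by (rule mult_left_le_imp_le) (use G(1) in simp)
          then have "1 - real dH / lH \<le> k" using H(1,2) by (intro div_step) auto
          moreover have "Inf KH \<le> 1 - real dH / lH" using K_lower[OF H(3)] by (simp add: KH_def)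
          ultimately show ?thesis by linarith
        next
          case False
          then have "m = lG * real dH" by (simp add: m_def)
          then have "real dH * real dG \<le> real dH * ((k - 1) * (- lG))" using key by (simp add: mult_ac)
          then have "real dG \<le> (k - 1) * (- lG)" by (rule mult_left_le_imp_le) (use H(1) in simp)
          then have "1 - real dG / lG \<le> k" using G(1,2) by (intro div_step) auto
          moreover have "Inf KG \<le> 1 - real dG / lG" using K_lower[OF G(3)] by (simp add: KG_def)
          ultimately show ?thesis by linarith
        qed
      qed
    qed
    have "min (Inf KG) (Inf KH) \<le> Inf KP" using neP ge by (intro cInf_greatest) auto
    then show ?thesis using le1 le2 cG cH cP by simp
  qed
qed


end
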